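(* Let $W$ be a positive word such that $W\doteq\Delta V$ for some positive word $V$. Then every node of the diagram $D(W)$ is incident with an edge labelled $\sigma_i$ for each $i=1,\dots,n-1$; that is, for every node $P$ of $D(W)$ and every $i$, either $P\sigma_i$ is a node of $D(W)$, or $P\doteq P'\sigma_i$ for some node $P'$ of $D(W)$.
   Context: Fix $n\ge 2$. $SB_n^+$ is the monoid with generators $\sigma_1,\dots,\sigma_{n-1},x_1,\dots,x_{n-1}$ and relations: $\sigma_i\sigma_j=\sigma_j\sigma_i$ and $x_ix_j=x_jx_i$ if $|i-j|>1$; $x_i\sigma_j=\sigma_jx_i$ if $|i-j|\ne 1$; $\sigma_i\sigma_{i+1}\sigma_i=\sigma_{i+1}\sigma_i\sigma_{i+1}$; $\sigma_i\sigma_{i+1}x_i=x_{i+1}\sigma_i\sigma_{i+1}$; $\sigma_{i+1}\sigma_ix_{i+1}=x_i\sigma_{i+1}\sigma_i$. Positive words are words in $\sigma_i,x_i$; $A\doteq B$ means equality in $SB_n^+$. $\Delta\equiv\sigma_1\cdots\sigma_{n-1}\,\sigma_1\cdots\sigma_{n-2}\cdots\sigma_1\sigma_2\,\sigma_1$. The (Cayley) diagram $D(W)$ of a positive word $W$ (Garside's diagram): its nodes are the elements $P$ of $SB_n^+$ that are left divisors of $W$ (i.e. $W\doteq PQ$ for some positive $Q$), including the empty word; for a generator $g\in\{\sigma_i,x_i\}$ there is a directed edge labelled $g$ from node $P$ to node $P'$ whenever $P'\doteq Pg$. *)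

theory Defs
  imports Main
begin

text \<open>Generators of the singular braid monoid SB_n^+: Sig i is sigma_i, X i is x_i.\<close>
datatype gen = Sig nat | X nat

definition valid_gen :: "nat \<Rightarrow> gen \<Rightarrow> bool" where
  "valid_gen n g = (case g of Sig i \<Rightarrow> 1 \<le> i \<and> i \<le> n - 1 | X i \<Rightarrow> 1 \<le> i \<and> i \<le> n - 1)"

definition valid_word :: "nat \<Rightarrow> gen list \<Rightarrow> bool" where
  "valid_word n w = (\<forall>g\<in>set w. valid_gen n g)"

inductive defrel :: "nat \<Rightarrow> gen list \<Rightarrow> gen list \<Rightarrow> bool" for n where
  ss_comm: "\<lbrakk>1 \<le> i; i \<le> n - 1; 1 \<le> j; j \<le> n - 1; i > j + 1 \<or> j > i + 1\<rbrakk>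
     \<Longrightarrow> defrel n [Sig i, Sig j] [Sig j, Sig i]"
| xx_comm: "\<lbrakk>1 \<le> i; i \<le> n - 1; 1 \<le> j; j \<le> n - 1; i > j + 1 \<or> j > i + 1\<rbrakk>
     \<Longrightarrow> defrel n [X i, X j] [X j, X i]"
| xs_comm: "\<lbrakk>1 \<le> i; i \<le> n - 1; 1 \<le> j; j \<le> n - 1; i \<noteq> j + 1; j \<noteq> i + 1\<rbrakk>
     \<Longrightarrow> defrel n [X i, Sig j] [Sig j, X i]"
| braid: "\<lbrakk>1 \<le> i; i + 1 \<le> n - 1\<rbrakk>
     \<Longrightarrow> defrel n [Sig i, Sig (i+1), Sig i] [Sig (i+1), Sig i, Sig (i+1)]"
| mixed1: "\<lbrakk>1 \<le> i; i + 1 \<le> n - 1\<rbrakk>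
     \<Longrightarrow> defrel n [Sig i, Sig (i+1), X i] [X (i+1), Sig i, Sig (i+1)]"
| mixed2: "\<lbrakk>1 \<le> i; i + 1 \<le> n - 1\<rbrakk>
     \<Longrightarrow> defrel n [Sig (i+1), Sig i, X (i+1)] [X i, Sig (i+1), Sig i]"

definition elem_step :: "nat \<Rightarrow> gen list \<Rightarrow> gen list \<Rightarrow> bool" where
  "elem_step n u v = (\<exists>a b l r. (defrel n l r \<or> defrel n r l) \<and> u = a @ l @ b \<and> v = a @ r @ b)"

definition eqw :: "nat \<Rightarrow> gen list \<Rightarrow> gen list \<Rightarrow> bool" where
  "eqw n = (elem_step n)\<^sup>*\<^sup>*"

definition Delta :: "nat \<Rightarrow> gen list" where
  "Delta n = concat (map (\<lambda>k. map Sig [1..<Suc k]) (rev [1..<n]))"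

text \<open>P is a node of D(W): P is a left divisor of W in SB_n^+.\<close>
definition node :: "nat \<Rightarrow> gen list \<Rightarrow> gen list \<Rightarrow> bool" where
  "node n W P = (valid_word n P \<and> (\<exists>Q. valid_word n Q \<and> eqw n W (P @ Q)))"

end

theory Submission
  imports Defs
begin


definition adj :: "nat \<Rightarrow> nat \<Rightarrow> bool" where "adj i j = (i = Suc j \<or> j = Suc i)"

lemma adj_irrefl[simp]: "\<not> adj i i" unfolding adj_def by auto

lemma adj_commute: "adj j i = adj i j" unfolding adj_def by auto

definition cpl :: "nat \<Rightarrow> gen \<Rightarrow> gen \<Rightarrow> gen list option" where
"cpl n a b = (if a = b then Some [] else if \<not> valid_gen n a \<or> \<not> valid_gen n b then None else
  (case a of Sig i \<Rightarrow> (case b of Sig j \<Rightarrow> if adj i j then Some [Sig j, Sig i] else Some [Sig j]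
                             | X j \<Rightarrow> if adj i j then Some [Sig j, X i] else Some [X j])
   | X i \<Rightarrow> (case b of Sig j \<Rightarrow> if adj i j then Some [Sig j, Sig i] else Some [Sig j]
                   | X j \<Rightarrow> if adj i j then None else Some [X j])))"

datatype rres = Fail | OOF | Ok "gen list" "gen list"

fun revf :: "nat \<Rightarrow> nat \<Rightarrow> gen list \<Rightarrow> gen list \<Rightarrow> rres" where
"revf n 0 U V = OOF"
| "revf n (Suc f) [] V = Ok V []"
| "revf n (Suc f) (u#U) [] = Ok [] (u#U)"
| "revf n (Suc f) (u#U) (v#V) = (case cpl n u v of None \<Rightarrow> Fail | Some c \<Rightarrow> (case cpl n v u of None \<Rightarrow> Fail | Some d \<Rightarrow>
     (case revf n f U c of Ok A1 B1 \<Rightarrow> (case revf n f V (d@B1) of Ok A2 B2 \<Rightarrow> Ok (A1@B2) A2 | r \<Rightarrow> r) | r \<Rightarrow> r)))"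

definition FF :: nat where "FF = 8"

definition cube_chk :: "nat \<Rightarrow> gen \<Rightarrow> gen \<Rightarrow> gen \<Rightarrow> bool" where
"cube_chk n a' a b = (case (cpl n a a', cpl n a' a, cpl n a' b, cpl n b a') of (Some u, Some v, Some c2, Some d2) \<Rightarrow>
  (case revf n FF v c2 of Fail \<Rightarrow> True | OOF \<Rightarrow> False | Ok A1 B1 \<Rightarrow>
     (case (cpl n a b, cpl n b a) of (Some c, Some d) \<Rightarrow>
        (case revf n FF (u@A1) c of Ok A C \<Rightarrow> A = [] \<and> revf n FF (d2@B1) (d@C) = Ok [] [] | _ \<Rightarrow> False)
      | _ \<Rightarrow> False))
  | _ \<Rightarrow> False)"

lemma cube_all:
  assumes "a' \<noteq> a" "a' \<noteq> b" "a \<noteq> b" "valid_gen n a'" "valid_gen n a" "valid_gen n b"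
    "cpl n a' a \<noteq> None" "cpl n a' b \<noteq> None"
  shows "cube_chk n a' a b"
  using assms
  apply (cases a'; cases a; cases b)
  apply (simp_all add: valid_gen_def)
  apply (simp_all add: cube_chk_def cpl_def FF_def numeral_eq_Suc valid_gen_def adj_commute split: if_split_asm if_split)
  apply (auto simp: adj_def)
  done


lemma elem_step_sym: "elem_step n u v \<Longrightarrow> elem_step n v u"
  unfolding elem_step_def by blast

lemma eqw_refl[simp]: "eqw n u u" unfolding eqw_def by simp

lemma eqw_trans: "eqw n u v \<Longrightarrow> eqw n v w \<Longrightarrow> eqw n u w"
  unfolding eqw_def by (rule rtranclp_trans)

declare eqw_trans[trans]

lemma eqw_sym: "eqw n u v \<Longrightarrow> eqw n v u"
  unfolding eqw_def
  by (induction rule: rtranclp_induct) (auto intro: elem_step_sym converse_rtranclp_into_rtranclp)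

lemma elem_step_cong: "elem_step n u v \<Longrightarrow> elem_step n (A@u@B) (A@v@B)"
  unfolding elem_step_def
  by (metis append.assoc)

lemma eqw_cong: "eqw n u v \<Longrightarrow> eqw n (A@u@B) (A@v@B)"
  unfolding eqw_def
  by (induction rule: rtranclp_induct) (auto intro: elem_step_cong rtranclp.rtrancl_into_rtrancl)

lemma eqw_cong_l: "eqw n u v \<Longrightarrow> eqw n (A@u) (A@v)"
  using eqw_cong[of n u v A "[]"] by simp

lemma eqw_cong_r: "eqw n u v \<Longrightarrow> eqw n (u@B) (v@B)"
  using eqw_cong[of n u v "[]" B] by simp

lemma eqw_cons: "eqw n u v \<Longrightarrow> eqw n (a#u) (a#v)"
  using eqw_cong_l[of n u v "[a]"] by simp

lemma defrel_len: "defrel n l r \<Longrightarrow> length l = length r"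
  by (induction rule: defrel.induct) auto

lemma defrel_valid: "defrel n l r \<Longrightarrow> valid_word n l \<and> valid_word n r"
  by (induction rule: defrel.induct) (auto simp: valid_word_def valid_gen_def)

lemma elem_step_len: "elem_step n u v \<Longrightarrow> length u = length v"
  unfolding elem_step_def using defrel_len by fastforce

lemma eqw_len: "eqw n u v \<Longrightarrow> length u = length v"
  unfolding eqw_def
  by (induction rule: rtranclp_induct) (auto dest: elem_step_len)

lemma elem_step_valid: "elem_step n u v \<Longrightarrow> valid_word n u = valid_word n v"
  unfolding elem_step_def using defrel_valid by (fastforce simp: valid_word_def)

lemma eqw_valid: "eqw n u v \<Longrightarrow> valid_word n u = valid_word n v"
  unfolding eqw_def
  by (induction rule: rtranclp_induct) (auto dest: elem_step_valid)

lemma defrel_mono: "defrel m l r \<Longrightarrow> m \<le> n \<Longrightarrow> defrel n l r"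
  by (induction rule: defrel.induct) (rule defrel.intros; arith)+

lemma far_aux: "(i::nat) \<noteq> j \<Longrightarrow> j \<noteq> Suc i \<Longrightarrow> i \<noteq> Suc j \<Longrightarrow> Suc j < i \<or> Suc i < j" by arith

section \<open>Relations versus complements\<close>

lemma comp_same[simp]: "cpl n a a = Some []" unfolding cpl_def by simp

lemma defrel_comp: "defrel n l r \<Longrightarrow> \<exists>a b u v. l = a#u \<and> r = b#v \<and> a \<noteq> b \<and> cpl n a b = Some u \<and> cpl n b a = Some v"
  by (induction rule: defrel.induct) (auto simp: cpl_def valid_gen_def adj_def)

lemma cpl_defrel:
  assumes "cpl n a b = Some u" "cpl n b a = Some v" "a \<noteq> b"
  shows "defrel n (a#u) (b#v) \<or> defrel n (b#v) (a#u)"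
proof (cases a)
  case (Sig i)
  show ?thesis
  proof (cases b)
    case (Sig j)
    with \<open>a = Sig i\<close> assms show ?thesis
      apply (auto simp: cpl_def valid_gen_def adj_def split: if_splits)
      using defrel.braid[of i n] defrel.braid[of j n] defrel.ss_comm[of i n j] far_aux[of i j] by auto
  next
    case (X j)
    with \<open>a = Sig i\<close> assms show ?thesis
      apply (auto simp: cpl_def valid_gen_def adj_def split: if_splits)
      using defrel.mixed1[of i n] defrel.mixed2[of j n] defrel.xs_comm[of j n i] by auto
  qed
next
  case (X i)
  show ?thesis
  proof (cases b)
    case (Sig j)
    with \<open>a = X i\<close> assms show ?thesis
      apply (auto simp: cpl_def valid_gen_def adj_def split: if_splits)
      using defrel.mixed1[of j n] defrel.mixed2[of i n] defrel.xs_comm[of i n j] by auto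
  next
    case (X j)
    with \<open>a = X i\<close> assms show ?thesis
      apply (auto simp: cpl_def valid_gen_def adj_def split: if_splits)
      using defrel.xx_comm[of i n j] far_aux[of i j] by auto
  qed
qed

lemma comp_eqw:
  assumes "cpl n a b = Some u" "cpl n b a = Some v"
  shows "eqw n (a#u) (b#v)"
proof (cases "a = b")
  case True with assms show ?thesis by simp
next
  case False
  from cpl_defrel[OF assms False]
  have "elem_step n (a#u) (b#v)"
    unfolding elem_step_def by (metis append_Nil append_Nil2)
  then show ?thesis unfolding eqw_def by simp
qed

lemma comp_valid: "cpl n a b = Some u \<Longrightarrow> a \<noteq> b \<Longrightarrow> valid_gen n a \<and> valid_gen n b"
  unfolding cpl_def by (auto split: if_splits)

section \<open>The complement theorem\<close>

definition Tprop :: "nat \<Rightarrow> nat \<Rightarrow> bool" where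
"Tprop n k = (\<forall>a b R Q. length R < k \<longrightarrow> eqw n (a#R) (b#Q) \<longrightarrow>
   (\<exists>c d Z. cpl n a b = Some c \<and> cpl n b a = Some d \<and> eqw n R (c@Z) \<and> eqw n Q (d@Z)))"

lemma Tprop_cancel:
  assumes "Tprop n k"
  shows "length (U@Y) \<le> k \<Longrightarrow> eqw n (U@Y) (U@Z) \<Longrightarrow> eqw n Y Z"
proof (induction U)
  case Nil then show ?case by simp
next
  case (Cons u U)
  from Cons.prems assms obtain c d W where "cpl n u u = Some c" "cpl n u u = Some d"
    "eqw n (U@Y) (c@W)" "eqw n (U@Z) (d@W)"
    unfolding Tprop_def by (metis Suc_le_lessD append_Cons length_Cons)
  then have "eqw n (U@Y) (U@Z)" by (auto intro: eqw_trans eqw_sym)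
  with Cons show ?case by simp
qed

lemma revf_sound: "revf n f U V = Ok A B \<Longrightarrow> eqw n (U@A) (V@B)"
proof (induction n f U V arbitrary: A B rule: revf.induct)
  case (4 n f u U v V)
  from "4.prems" obtain c d A1 B1 A2 B2 where
    c: "cpl n u v = Some c" and d: "cpl n v u = Some d" and
    r1: "revf n f U c = Ok A1 B1" and r2: "revf n f V (d@B1) = Ok A2 B2" and
    AB: "A = A1@B2" "B = A2"
    by (auto split: option.splits rres.splits)
  have e1: "eqw n (U@A1) (c@B1)" using "4.IH"(1)[OF c d r1] .
  have e2: "eqw n (V@A2) (d@B1@B2)" using "4.IH"(2)[OF c d r1 r2] by simp
  have "eqw n ((u#U)@A) (u#(U@A1)@B2)" using AB by simp
  also have "eqw n ... (u#c@B1@B2)" using eqw_cong_r[OF e1, of B2] eqw_cons by fastforce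
  also have "eqw n ... (v#d@B1@B2)" using eqw_cong_r[OF comp_eqw[OF c d], of "B1@B2"] by simp
  also have "eqw n ... (v#V@A2)" using eqw_cons[OF eqw_sym[OF e2]] .
  finally show ?case using AB by simp
qed auto


lemma revf_sol:
  shows "Tprop n k \<Longrightarrow> length (U@Y) \<le> k \<Longrightarrow> eqw n (U@Y) (V@Z) \<Longrightarrow>
     (revf n f U V \<noteq> Fail) \<and> (\<forall>A B. revf n f U V = Ok A B \<longrightarrow> (\<exists>X. eqw n Y (A@X) \<and> eqw n Z (B@X)))"
proof (induction n f U V arbitrary: Y Z rule: revf.induct)
  case (2 n f V)
  have h: "eqw n Y (V@Z)" using "2.prems"(3) by simp
  show ?case
  proof (intro conjI allI impI)
    show "revf n (Suc f) [] V \<noteq> Fail" by simp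
    fix A B assume "revf n (Suc f) [] V = Ok A B"
    then have "A = V" "B = []" by auto
    then show "\<exists>X. eqw n Y (A@X) \<and> eqw n Z (B@X)" using h by (intro exI[of _ Z]) simp
  qed
next
  case (3 n f u U)
  have h: "eqw n Z ((u#U)@Y)" using eqw_sym "3.prems"(3) by simp
  show ?case
  proof (intro conjI allI impI)
    show "revf n (Suc f) (u#U) [] \<noteq> Fail" by simp
    fix A B assume "revf n (Suc f) (u#U) [] = Ok A B"
    then have "A = []" "B = u#U" by auto
    then show "\<exists>X. eqw n Y (A@X) \<and> eqw n Z (B@X)" using h by (intro exI[of _ Y]) simp
  qed
next
  case (4 n f u U v V)
  have lk: "length (U@Y) < k" using "4.prems"(2) by simp
  have e0: "eqw n (u#(U@Y)) (v#(V@Z))" using "4.prems"(3) by simp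
  obtain c d X1 where c: "cpl n u v = Some c" and d: "cpl n v u = Some d"
    and e1: "eqw n (U@Y) (c@X1)" and e2: "eqw n (V@Z) (d@X1)"
  proof -
    from "4.prems"(1) have "\<forall>a b R Q. length R < k \<longrightarrow> eqw n (a#R) (b#Q) \<longrightarrow>
      (\<exists>c d Z. cpl n a b = Some c \<and> cpl n b a = Some d \<and> eqw n R (c@Z) \<and> eqw n Q (d@Z))"
      unfolding Tprop_def .
    then have "\<exists>c d W. cpl n u v = Some c \<and> cpl n v u = Some d \<and> eqw n (U@Y) (c@W) \<and> eqw n (V@Z) (d@W)"
      using lk e0 by blast
    then show ?thesis using that by blast
  qed
  have l1: "length (U@Y) \<le> k" using "4.prems"(2) by simp
  note IH1 = "4.IH"(1)[OF c d, of Y X1, OF "4.prems"(1) l1 e1]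
  show ?case
  proof (cases "revf n f U c")
    case Fail with IH1 show ?thesis by simp
  next
    case OOF then show ?thesis using c d by simp
  next
    case (Ok A1 B1)
    with IH1 obtain X2 where y: "eqw n Y (A1@X2)" and x1: "eqw n X1 (B1@X2)" by auto
    have len: "length ((u#U)@Y) = length ((v#V)@Z)" using eqw_len[OF "4.prems"(3)] .
    have l2: "length (V@Z) \<le> k" using "4.prems"(2) len by simp
    have e3: "eqw n (V@Z) ((d@B1)@X2)" using eqw_trans[OF e2 eqw_cong_l[OF x1, of d]] by simp
    note IH2 = "4.IH"(2)[OF c d Ok, of Z X2, OF "4.prems"(1) l2 e3]
    show ?thesis
    proof (cases "revf n f V (d@B1)")
      case Fail with IH2 show ?thesis by simp
    next
      case OOF then show ?thesis using c d Ok by simp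
    next
      case (Ok A2 B2)
      with IH2 obtain X3 where z: "eqw n Z (A2@X3)" and x2: "eqw n X2 (B2@X3)" by auto
      have "eqw n Y ((A1@B2)@X3)" using eqw_trans[OF y eqw_cong_l[OF x2, of A1]] by simp
      then have "\<exists>X. eqw n Y ((A1@B2)@X) \<and> eqw n Z (A2@X)" using z by blast
      then show ?thesis using c d \<open>revf n f U c = Ok A1 B1\<close> Ok by simp
    qed
  qed
qed simp

lemma comp_nonempty: "cpl n a b = Some u \<Longrightarrow> a \<noteq> b \<Longrightarrow> u \<noteq> []"
  unfolding cpl_def by (auto split: if_splits gen.splits)

lemma T_step:
  assumes T: "Tprop n k" and E: "eqw n w (b#Q)"
  shows "w = a#R \<Longrightarrow> length R = k \<Longrightarrow>
    (\<exists>c d Z. cpl n a b = Some c \<and> cpl n b a = Some d \<and> eqw n R (c@Z) \<and> eqw n Q (d@Z))"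
proof -
  have "(elem_step n)\<^sup>*\<^sup>* w (b#Q)" using E unfolding eqw_def .
  then show "w = a#R \<Longrightarrow> length R = k \<Longrightarrow>
    (\<exists>c d Z. cpl n a b = Some c \<and> cpl n b a = Some d \<and> eqw n R (c@Z) \<and> eqw n Q (d@Z))"
proof (induction arbitrary: a R rule: converse_rtranclp_induct)
  case base
  then have "a = b" "R = Q" by auto
  then show ?case by (intro exI[of _ "[]"] exI[of _ R]) simp
next
  case (step w0 w1)
  from step.hyps(1) obtain A B' l r where lr: "defrel n l r \<or> defrel n r l"
    and w0: "w0 = A@l@B'" and w1: "w1 = A@r@B'" unfolding elem_step_def by blast
  have lw: "length w1 = length w0" using elem_step_len[OF step.hyps(1)] by simp
  show ?case
  proof (cases A)
    case (Cons a0 A')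
    with w0 step.prems have a0: "a0 = a" and R: "R = A'@l@B'" by auto
    have "length (A'@r@B') = k" using lw w0 w1 Cons step.prems by simp
    from step.IH[of a "A'@r@B'"] this w1 Cons a0 obtain c d Z where
      res: "cpl n a b = Some c" "cpl n b a = Some d" "eqw n (A'@r@B') (c@Z)" "eqw n Q (d@Z)"
      by auto
    have "elem_step n R (A'@r@B')" unfolding R elem_step_def using lr by blast
    then have "eqw n R (A'@r@B')" unfolding eqw_def by simp
    with res show ?thesis by (meson eqw_trans)
  next
    case Nil
    obtain a1 a' u v where l: "l = a1#u" and r: "r = a'#v" and ne: "a1 \<noteq> a'"
       and cu: "cpl n a1 a' = Some u" and cv: "cpl n a' a1 = Some v"
      using lr defrel_comp by metis
    with w0 Nil step.prems have a1: "a1 = a" and R: "R = u@B'" by auto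
    have lenv: "length (v@B') = k" using lw w0 w1 Nil l r step.prems by simp
    from step.IH[of a' "v@B'"] lenv w1 Nil r obtain c2 d2 Z where
      c2: "cpl n a' b = Some c2" and d2: "cpl n b a' = Some d2" and
      e1: "eqw n (v@B') (c2@Z)" and e2: "eqw n Q (d2@Z)"
      by auto
    show ?thesis
    proof (cases "a' = b")
      case True
      with c2 d2 have "c2 = []" "d2 = []" by auto
      with True e1 e2 have "eqw n Q (v@B')" by (metis eqw_trans eqw_sym append_Nil)
      then show ?thesis using cu cv a1 R True by (intro exI[of _ u] exI[of _ v] exI[of _ B']) auto
    next
      case False
      show ?thesis
      proof (cases "a = b")
        case True
        with c2 cv a1 have "c2 = v" by simp
        with e1 have "eqw n (v@B') (v@Z)" by simp
        have bz: "eqw n B' Z" using Tprop_cancel[OF T, of v B' Z] lenv \<open>eqw n (v@B') (v@Z)\<close> by simp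
        from True d2 cu a1 have "d2 = u" by simp
        with e2 have "eqw n Q (u@Z)" by simp
        moreover have "eqw n R (u@Z)" using R eqw_cong_l[OF bz] by simp
        ultimately show ?thesis using True by auto
      next
        case abd: False
        have va: "valid_gen n a" "valid_gen n a'" using comp_valid[OF cu ne] a1 by auto
        have vb: "valid_gen n b" using comp_valid[OF c2 False] by auto
        have cube: "cube_chk n a' a b"
          using cube_all[of a' a b n] ne a1 False abd va vb cv c2 by auto
        have lv: "length (v@B') \<le> k" using lenv by simp
        note sol = revf_sol[OF T lv e1, of FF]
        show ?thesis
        proof (cases "revf n FF v c2")
          case Fail with sol show ?thesis by simp
        next
          case OOF with cube cu cv c2 d2 a1 show ?thesis unfolding cube_chk_def by simp
        next
          case (Ok A1 B1)
          with sol obtain X where bx: "eqw n B' (A1@X)" and zx: "eqw n Z (B1@X)" by auto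
          from cube Ok cu cv c2 d2 a1 obtain c d C where
            c: "cpl n a b = Some c" and d: "cpl n b a = Some d" and
            r1: "revf n FF (u@A1) c = Ok [] C" and r2: "revf n FF (d2@B1) (d@C) = Ok [] []"
            unfolding cube_chk_def by (auto split: option.splits rres.splits)
          have s1: "eqw n (u@A1) (c@C)" using revf_sound[OF r1] by simp
          have s2: "eqw n (d2@B1) (d@C)" using revf_sound[OF r2] by simp
          have "eqw n R (u@A1@X)" using R eqw_cong_l[OF bx] by simp
          also have "eqw n ... (c@C@X)" using eqw_cong_r[OF s1, of X] by simp
          finally have f1: "eqw n R (c@C@X)" .
          have "eqw n Q (d2@B1@X)" using eqw_trans[OF e2 eqw_cong_l[OF zx]] .
          also have "eqw n ... (d@C@X)" using eqw_cong_r[OF s2, of X] by simp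
          finally have f2: "eqw n Q (d@C@X)" .
          from c d f1 f2 show ?thesis by blast
        qed
      qed
    qed
  qed
qed
qed

lemma Tprop_all: "Tprop n k"
proof (induction k)
  case 0 then show ?case unfolding Tprop_def by simp
next
  case (Suc k)
  show ?case unfolding Tprop_def
  proof (intro allI impI)
    fix a b R Q assume l: "length R < Suc k" and e: "eqw n (a#R) (b#Q)"
    show "\<exists>c d Z. cpl n a b = Some c \<and> cpl n b a = Some d \<and> eqw n R (c@Z) \<and> eqw n Q (d@Z)"
    proof (cases "length R < k")
      case True with Suc e show ?thesis unfolding Tprop_def by blast
    next
      case False with l have "length R = k" by simp
      with T_step[OF Suc e] show ?thesis by simp
    qed
  qed
qed

lemma Tcomp: "eqw n (a#R) (b#Q) \<Longrightarrow>
   (\<exists>c d Z. cpl n a b = Some c \<and> cpl n b a = Some d \<and> eqw n R (c@Z) \<and> eqw n Q (d@Z))"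
  using Tprop_all[of n "Suc (length R)"] unfolding Tprop_def by blast

lemma cancel: "eqw n (U@Y) (U@Z) \<Longrightarrow> eqw n Y Z"
proof -
  have "Tprop n (length (U@Y))" by (rule Tprop_all)
  from Tprop_cancel[OF this order_refl] show "eqw n (U@Y) (U@Z) \<Longrightarrow> eqw n Y Z" .
qed



lemma vg: "valid_gen n (Sig i) = (1 \<le> i \<and> i \<le> n - 1)" "valid_gen n (X i) = (1 \<le> i \<and> i \<le> n - 1)"
  by (auto simp: valid_gen_def)

lemma adj_ne: "adj i j \<Longrightarrow> i \<noteq> j \<and> j \<noteq> i" unfolding adj_def by auto

lemma L_comm_ss: "i \<noteq> j \<Longrightarrow> \<not> adj i j \<Longrightarrow> 1 \<le> i \<Longrightarrow> i \<le> n - 1 \<Longrightarrow> 1 \<le> j \<Longrightarrow> j \<le> n - 1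
   \<Longrightarrow> eqw n [Sig i, Sig j] [Sig j, Sig i]"
  using comp_eqw[of n "Sig i" "Sig j" "[Sig j]" "[Sig i]"] by (simp add: cpl_def vg adj_commute)

lemma L_comm_sx: "\<not> adj i j \<Longrightarrow> 1 \<le> i \<Longrightarrow> i \<le> n - 1 \<Longrightarrow> 1 \<le> j \<Longrightarrow> j \<le> n - 1
   \<Longrightarrow> eqw n [Sig i, X j] [X j, Sig i]"
  using comp_eqw[of n "Sig i" "X j" "[X j]" "[Sig i]"] by (simp add: cpl_def vg adj_commute)

lemma L_braid: "adj i j \<Longrightarrow> 1 \<le> i \<Longrightarrow> i \<le> n - 1 \<Longrightarrow> 1 \<le> j \<Longrightarrow> j \<le> n - 1
   \<Longrightarrow> eqw n [Sig j, Sig i, Sig j] [Sig i, Sig j, Sig i]"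
  using comp_eqw[of n "Sig j" "Sig i" "[Sig i, Sig j]" "[Sig j, Sig i]"] adj_ne[of i j] by (simp add: cpl_def vg adj_commute)

lemma L_mixed: "adj i j \<Longrightarrow> 1 \<le> i \<Longrightarrow> i \<le> n - 1 \<Longrightarrow> 1 \<le> j \<Longrightarrow> j \<le> n - 1
   \<Longrightarrow> eqw n [Sig j, Sig i, X j] [X i, Sig j, Sig i]"
  using comp_eqw[of n "Sig j" "X i" "[Sig i, X j]" "[Sig j, Sig i]"] adj_ne[of i j] by (simp add: cpl_def vg adj_commute)

lemma cpl_head: "g \<noteq> Sig i \<Longrightarrow> cpl n g (Sig i) = Some d \<Longrightarrow> \<exists>d'. d = Sig i # d'"
  by (cases g) (auto simp: cpl_def split: if_splits)

lemma node_intro: "valid_word n W \<Longrightarrow> eqw n W (P@Q) \<Longrightarrow> node n W P"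
  unfolding node_def using eqw_valid[of n W "P@Q"] by (auto simp: valid_word_def)

lemma node_E: "node n W P \<Longrightarrow> \<exists>Q. eqw n W (P@Q)"
  unfolding node_def by auto

lemma cancel1: "eqw n (a#Y) (a#Z) \<Longrightarrow> eqw n Y Z"
  using cancel[of n "[a]" Y Z] by simp

lemma main:
  assumes divs: "\<And>i. 1 \<le> i \<Longrightarrow> i \<le> n - 1 \<Longrightarrow> \<exists>D. eqw n W (Sig i # D)"
    and vW: "valid_word n W"
  shows "node n W P \<Longrightarrow> 1 \<le> i \<Longrightarrow> i \<le> n - 1 \<Longrightarrow>
     node n W (P@[Sig i]) \<or> (\<exists>P'. node n W P' \<and> eqw n P (P'@[Sig i]))"
proof (induction "length P" arbitrary: P i rule: less_induct)
  case less
  note nP = less.prems(1) and i1 = less.prems(2) and i2 = less.prems(3)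
  show ?case
  proof (cases P rule: rev_cases)
    case Nil
    from divs[OF i1 i2] obtain D where "eqw n W (Sig i # D)" by blast
    then have "node n W (P@[Sig i])" using node_intro[OF vW, of "[Sig i]" D] Nil by simp
    then show ?thesis by blast
  next
    case (snoc P0 g)
    from node_E[OF nP] obtain Q where WQ0: "eqw n W (P@Q)" by blast
    then have WQ: "eqw n W (P0 @ g # Q)" using snoc by simp
    have nP0: "node n W P0" using node_intro[OF vW WQ] .
    have vg0: "valid_gen n g" using nP snoc by (auto simp: node_def valid_word_def)
    have IH0: "node n W (P0@[Sig i]) \<or> (\<exists>P'. node n W P' \<and> eqw n P0 (P'@[Sig i]))"
      using less.hyps[of P0 i] nP0 i1 i2 snoc by simp
    show ?thesis
    proof (cases "g = Sig i")
      case True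
      then have "eqw n P (P0@[Sig i])" using snoc by simp
      then show ?thesis using nP0 by blast
    next
      case gne: False
      from IH0 show ?thesis
      proof
        assume "node n W (P0@[Sig i])"
        from node_E[OF this] obtain R where h: "eqw n W ((P0@[Sig i])@R)" by blast
        have "eqw n (P0@(Sig i#R)) (P0@(g#Q))" using eqw_trans[OF eqw_sym[OF h] WQ] by simp
        then have "eqw n (Sig i#R) (g#Q)" by (rule cancel)
        from Tcomp[OF this] obtain c d Z where cd: "cpl n g (Sig i) = Some d" and qz: "eqw n Q (d@Z)" by blast
        from cpl_head[OF gne cd] obtain d' where "d = Sig i # d'" by blast
        with qz have "eqw n W ((P@[Sig i])@(d'@Z))" using eqw_trans[OF WQ0 eqw_cong_l[OF qz, of P]] by simp
        then show ?thesis using node_intro[OF vW] by blast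
      next
        assume "\<exists>P'. node n W P' \<and> eqw n P0 (P'@[Sig i])"
        then obtain P0' where nP0': "node n W P0'" and e0: "eqw n P0 (P0'@[Sig i])" by blast
        have eP: "eqw n P (P0'@[Sig i, g])" using eqw_cong_r[OF e0, of "[g]"] snoc by simp
        have WP: "eqw n W (P0'@[Sig i, g]@Q)" using eqw_trans[OF WQ0 eqw_cong_r[OF eP, of Q]] by simp
        have lenP0': "length P0' < length P" using eqw_len[OF e0] snoc by simp
        obtain j where gj: "g = Sig j \<or> g = X j" by (cases g) auto
        have j1: "1 \<le> j" and j2: "j \<le> n - 1" using vg0 gj by (auto simp: valid_gen_def)
        show ?thesis
        proof (cases "adj i j")
          case False
          have cm: "eqw n [Sig i, g] [g, Sig i]"
            using gj L_comm_ss[OF _ False i1 i2 j1 j2] L_comm_sx[OF False i1 i2 j1 j2] gne by auto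
          then have "eqw n P ((P0'@[g])@[Sig i])" using eqw_trans[OF eP eqw_cong_l[OF cm, of P0']] by simp
          moreover have "eqw n W ((P0'@[g])@(Sig i#Q))"
            using eqw_trans[OF WP eqw_cong[OF cm, of P0' Q]] by simp
          then have "node n W (P0'@[g])" using node_intro[OF vW] by blast
          ultimately show ?thesis by blast
        next
          case adjij: True
          have IH1: "node n W (P0'@[Sig j]) \<or> (\<exists>P'. node n W P' \<and> eqw n P0' (P'@[Sig j]))"
            using less.hyps[OF lenP0' nP0' j1 j2] .
          from IH1 show ?thesis
          proof
            assume "node n W (P0'@[Sig j])"
            from node_E[OF this] obtain R1 where h: "eqw n W ((P0'@[Sig j])@R1)" by blast
            have "eqw n (P0'@(Sig j#R1)) (P0'@(Sig i#g#Q))" using eqw_trans[OF eqw_sym[OF h] WP] by simp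
            then have "eqw n (Sig j#R1) (Sig i#(g#Q))" by (rule cancel)
            from Tcomp[OF this] obtain c d Z where cd: "cpl n (Sig i) (Sig j) = Some d" and qz: "eqw n (g#Q) (d@Z)" by blast
            have "d = [Sig j, Sig i]" using cd adjij adj_ne[OF adjij] i1 i2 j1 j2 by (simp add: cpl_def vg adj_commute)
            with qz have gq: "eqw n (g#Q) (Sig j # Sig i # Z)" by simp
            have "\<exists>Z'. eqw n Q (Sig i # Z')"
            proof (cases "g = Sig j")
              case True
              then show ?thesis using cancel1[of n "Sig j" Q "Sig i # Z"] gq by blast
            next
              case False
              with gj have gx: "g = X j" by auto
              from Tcomp[of n "X j" Q "Sig j" "Sig i # Z"] gq gx obtain c1 d1 Z1 where
                c1: "cpl n (X j) (Sig j) = Some c1" and d1: "cpl n (Sig j) (X j) = Some d1"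
                and q1: "eqw n Q (c1@Z1)" and z1: "eqw n (Sig i # Z) (d1@Z1)" by blast
              have "c1 = [Sig j]" "d1 = [X j]" using c1 d1 j1 j2 by (auto simp: cpl_def vg)
              with q1 z1 have q1': "eqw n Q (Sig j # Z1)" and z1': "eqw n (Sig i # Z) (X j # Z1)" by auto
              from Tcomp[OF z1'] obtain c2 d2 Z2 where c2: "cpl n (X j) (Sig i) = Some d2"
                and q2: "eqw n Z1 (d2@Z2)" by blast
              have "d2 = [Sig i, Sig j]" using c2 adjij adj_ne[OF adjij] i1 i2 j1 j2 by (simp add: cpl_def vg adj_commute)
              with q2 have "eqw n Z1 ([Sig i, Sig j]@Z2)" by simp
              then have "eqw n Q ([Sig j, Sig i, Sig j]@Z2)" using eqw_trans[OF q1' eqw_cons[of n Z1 _ "Sig j"]] by simp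
              also have "eqw n ... ([Sig i, Sig j, Sig i]@Z2)" using eqw_cong_r[OF L_braid[OF adjij i1 i2 j1 j2]] by simp
              finally show ?thesis by auto
            qed
            then obtain Z' where "eqw n Q (Sig i # Z')" by blast
            then have "eqw n W ((P@[Sig i])@Z')" using eqw_trans[OF WQ0 eqw_cong_l[of n Q "Sig i # Z'" P]] by simp
            then show ?thesis using node_intro[OF vW] by blast
          next
            assume "\<exists>P'. node n W P' \<and> eqw n P0' (P'@[Sig j])"
            then obtain P1 where e1: "eqw n P0' (P1@[Sig j])" by blast
            have eP1: "eqw n P (P1@[Sig j, Sig i, g])" using eqw_trans[OF eP eqw_cong_r[OF e1, of "[Sig i, g]"]] by simp
            obtain P' where eP': "eqw n P (P'@[Sig i])"
            proof (cases "g = Sig j")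
              case True
              have "eqw n P ((P1@[Sig i, Sig j])@[Sig i])"
                using eqw_trans[OF eP1[unfolded True] eqw_cong_l[OF L_braid[OF adjij i1 i2 j1 j2], of P1]] by simp
              then show ?thesis using that by blast
            next
              case False
              with gj have gx: "g = X j" by auto
              have "eqw n P ((P1@[X i, Sig j])@[Sig i])"
                using eqw_trans[OF eP1[unfolded gx] eqw_cong_l[OF L_mixed[OF adjij i1 i2 j1 j2], of P1]] by simp
              then show ?thesis using that by blast
            qed
            have "eqw n W (P'@(Sig i#Q))" using eqw_trans[OF WQ0 eqw_cong_r[OF eP', of Q]] by simp
            then have "node n W P'" using node_intro[OF vW] by blast
            with eP' show ?thesis by blast
          qed
        qed
      qed
    qed
  qed
qed



definition row :: "nat \<Rightarrow> gen list" where "row k = map Sig [1..<Suc k]"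

lemma row_Suc: "row (Suc m) = row m @ [Sig (Suc m)]" unfolding row_def by simp

lemma row_0: "row 0 = []" unfolding row_def by simp

lemma Delta_Suc: "1 \<le> m \<Longrightarrow> Delta (Suc m) = row m @ Delta m"
  unfolding Delta_def row_def by (simp add: upt_Suc_append)

lemma rel_eqw: "defrel n l r \<Longrightarrow> eqw n (A@l@B) (A@r@B)"
  unfolding eqw_def elem_step_def by blast

lemma row_comm: "p + 1 < j \<Longrightarrow> j \<le> n - 1 \<Longrightarrow> eqw n (row p @ [Sig j]) (Sig j # row p)"
proof (induction p)
  case 0 then show ?case by (simp add: row_0)
next
  case (Suc p)
  have d: "defrel n [Sig (Suc p), Sig j] [Sig j, Sig (Suc p)]"
    using Suc.prems by (intro defrel.ss_comm) auto
  have "eqw n (row (Suc p) @ [Sig j]) (row p @ [Sig j] @ [Sig (Suc p)])"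
    using rel_eqw[OF d, of "row p" "[]"] by (simp add: row_Suc)
  also have "eqw n ... ((Sig j # row p) @ [Sig (Suc p)])"
    using eqw_cong_r[OF Suc.IH, of "[Sig (Suc p)]"] Suc.prems by simp
  finally show ?case by (simp add: row_Suc)
qed

lemma row_shift: "1 \<le> i \<Longrightarrow> i + 1 \<le> m \<Longrightarrow> m \<le> n - 1 \<Longrightarrow> eqw n (row m @ [Sig i]) (Sig (i+1) # row m)"
proof (induction m)
  case 0 then show ?case by simp
next
  case (Suc m)
  show ?case
  proof (cases "i + 1 \<le> m")
    case True
    have d: "defrel n [Sig (Suc m), Sig i] [Sig i, Sig (Suc m)]"
      using Suc.prems True by (intro defrel.ss_comm) auto
    have "eqw n (row (Suc m) @ [Sig i]) (row m @ [Sig i] @ [Sig (Suc m)])"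
      using rel_eqw[OF d, of "row m" "[]"] by (simp add: row_Suc)
    also have "eqw n ... ((Sig (i+1) # row m) @ [Sig (Suc m)])"
      using eqw_cong_r[OF Suc.IH, of "[Sig (Suc m)]"] Suc.prems True by simp
    finally show ?thesis by (simp add: row_Suc)
  next
    case False
    with Suc.prems have im: "i = m" by simp
    with Suc.prems have m1: "1 \<le> m" by simp
    then obtain q where q: "m = Suc q" by (cases m) auto
    have rm: "row (Suc m) = row q @ [Sig m, Sig (Suc m)]" using q by (simp add: row_Suc)
    have d: "defrel n [Sig m, Sig (m+1), Sig m] [Sig (m+1), Sig m, Sig (m+1)]"
      using Suc.prems m1 by (intro defrel.braid) auto
    have "eqw n (row (Suc m) @ [Sig i]) (row q @ [Sig (m+1), Sig m, Sig (m+1)])"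
      using rel_eqw[OF d, of "row q" "[]"] rm im by simp
    also have "eqw n ... ((row q @ [Sig (m+1)]) @ [Sig m, Sig (m+1)])" by simp
    also have "eqw n ... ((Sig (m+1) # row q) @ [Sig m, Sig (m+1)])"
      using eqw_cong_r[OF row_comm[of q "m+1" n]] q Suc.prems by simp
    finally show ?thesis using rm im by simp
  qed
qed

lemma Delta_div: "1 \<le> i \<Longrightarrow> i \<le> m - 1 \<Longrightarrow> m \<le> n \<Longrightarrow> \<exists>D. eqw n (Delta m) (Sig i # D)"
proof (induction m arbitrary: i)
  case 0 then show ?case by simp
next
  case (Suc m)
  then have m1: "1 \<le> m" by simp
  have DS: "Delta (Suc m) = row m @ Delta m" using Delta_Suc[OF m1] .
  show ?case
  proof (cases "i = 1")
    case True
    have "row m = Sig 1 # tl (row m)" using m1 unfolding row_def by (simp add: upt_rec)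
    then have "Delta (Suc m) = Sig i # (tl (row m) @ Delta m)" using DS True by (metis append_Cons)
    then show ?thesis by (metis eqw_refl)
  next
    case False
    with Suc.prems have "1 \<le> i - 1" "i - 1 \<le> m - 1" "m \<le> n" by auto
    from Suc.IH[OF this] obtain D where D: "eqw n (Delta m) (Sig (i-1) # D)" by blast
    have "eqw n (Delta (Suc m)) ((row m @ [Sig (i-1)]) @ D)"
      using DS eqw_cong_l[OF D, of "row m"] by simp
    also have "eqw n ... ((Sig (i - 1 + 1) # row m) @ D)"
      using eqw_cong_r[OF row_shift[of "i-1" m n]] Suc.prems False by simp
    finally show ?thesis using Suc.prems False by (metis append_Cons Nat.le_imp_diff_is_add add.commute le_add_diff_inverse2 le_numeral_extra(4) not_le_imp_less less_one)
  qed
qed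

theorem theorem3p1:
  fixes n :: nat and W V P :: "gen list" and i :: nat
  assumes "n \<ge> 2"
    and "valid_word n W" and "valid_word n V"
    and "eqw n W (Delta n @ V)"
    and "node n W P"
    and "1 \<le> i" and "i \<le> n - 1"
  shows "node n W (P @ [Sig i]) \<or> (\<exists>P'. node n W P' \<and> eqw n P (P' @ [Sig i]))"
proof -
  have divs: "\<exists>D. eqw n W (Sig k # D)" if "1 \<le> k" "k \<le> n - 1" for k
  proof -
    from Delta_div[OF that order_refl] obtain D where "eqw n (Delta n) (Sig k # D)" by blast
    then have "eqw n W (Sig k # D @ V)" using eqw_trans[OF assms(4) eqw_cong_r[OF \<open>eqw n (Delta n) (Sig k # D)\<close>, of V]] by simp
    then show ?thesis by blast
  qed
  show ?thesis using main[OF divs assms(2) assms(5) assms(6) assms(7)] by blast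
qed

end
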